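(* Let $\rho:\mathbb{Z}_{\ge 0}\to[0,1]$ be a mapping probability with $\rho(i)=o(1/i)$ as $i\to\infty$, and let $\sigma>0$. Suppose that $m=m(|S|)$ is such that, for a random set $S$ of source symbols, with probability $\sigma$ there exist at least $|S|$ non-empty coded symbols among the first $m$ coded symbols (indices $0,1,\dots,m-1$). Then $m=\omega(|S|)$, i.e., for every $\eta>0$ there exists $|S|_0$ such that $m>\eta|S|$ whenever $|S|>|S|_0$.
   Context: Model: a set $S$ of source symbols is encoded into an infinite sequence of coded symbols indexed by $i=0,1,2,\dots$. Each source symbol is mapped to the $i$-th coded symbol with probability $\rho(i)$ (the mapping probability), independently across source symbols and across indices. A coded symbol is non-empty if at least one source symbol is mapped to it. *)

theory Defs
  imports "HOL-Probability.Probability"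
begin

text \<open>Random mapping of source symbols to coded symbols, restricted to the
first m coded symbols (indices 0..m-1).  Source symbols are 0..n-1 (n = |S|).
A map f has f (j, i) = True iff source symbol j is mapped to coded symbol i;
each pair (j,i) is included independently with probability rho i.\<close>
definition coding_pmf :: "(nat \<Rightarrow> real) \<Rightarrow> nat \<Rightarrow> nat \<Rightarrow> (nat \<times> nat \<Rightarrow> bool) pmf" where
  "coding_pmf \<rho> n m = Pi_pmf ({..<n} \<times> {..<m}) False (\<lambda>(j, i). bernoulli_pmf (\<rho> i))"

definition nonempty_count :: "nat \<Rightarrow> nat \<Rightarrow> (nat \<times> nat \<Rightarrow> bool) \<Rightarrow> nat" where
  "nonempty_count n m f = card {i. i < m \<and> (\<exists>j<n. f (j, i))}"

end

theory Submission
  imports Defs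
begin

lemma prob_comp:
  assumes "\<And>i. 0 \<le> \<rho> i \<and> \<rho> i \<le> 1" "j < n" "i < m"
  shows "measure_pmf.prob (coding_pmf \<rho> n m) {f. f (j, i)} = \<rho> i"
proof -
  have "measure_pmf.prob (coding_pmf \<rho> n m) {f. f (j, i)} =
        measure_pmf.prob (map_pmf (\<lambda>f. f (j,i)) (coding_pmf \<rho> n m)) {True}"
    by (simp add: vimage_def)
  also have "map_pmf (\<lambda>f. f (j,i)) (coding_pmf \<rho> n m) = bernoulli_pmf (\<rho> i)"
    unfolding coding_pmf_def using assms(2,3) by (subst Pi_pmf_component) auto
  finally show ?thesis using assms(1)[of i] by (simp add: measure_pmf_single)
qed

lemma prob_nonempty:
  assumes "\<And>i. 0 \<le> \<rho> i \<and> \<rho> i \<le> 1" "i < m"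
  shows "measure_pmf.prob (coding_pmf \<rho> n m) {f. \<exists>j<n. f (j, i)} \<le> min 1 (real n * \<rho> i)"
proof -
  have "{f. \<exists>j<n. f (j, i)} = (\<Union>j\<in>{..<n}. {f. f (j, i)})" by auto
  hence "measure_pmf.prob (coding_pmf \<rho> n m) {f. \<exists>j<n. f (j, i)} \<le>
     (\<Sum>j<n. measure_pmf.prob (coding_pmf \<rho> n m) {f. f (j, i)})"
    by (simp add: measure_pmf.finite_measure_subadditive_finite)
  also have "\<dots> = real n * \<rho> i" using prob_comp[OF assms(1) _ assms(2)] by simp
  finally show ?thesis by simp
qed

lemma markov_part:
  assumes "\<And>i. 0 \<le> \<rho> i \<and> \<rho> i \<le> 1"
  shows "measure_pmf.prob (coding_pmf \<rho> n m) {f. nonempty_count n m f \<ge> n} * real n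
     \<le> (\<Sum>i<m. min 1 (real n * \<rho> i))"
proof (cases "n = 0")
  case True then show ?thesis by (simp add: sum_nonneg assms)
next
  case False
  define M where "M = coding_pmf \<rho> n m"
  define X where "X = (\<lambda>f. \<Sum>i<m. indicator {f. \<exists>j<n. f (j, i)} f :: real)"
  have cnt: "real (nonempty_count n m f) = X f" for f
  proof -
    have "{i. i < m \<and> (\<exists>j<n. f (j, i))} = {..<m} \<inter> {i. \<exists>j<n. f (j, i)}" by auto
    then show ?thesis unfolding nonempty_count_def X_def
      by (simp add: indicator_def sum.If_cases)
  qed
  have int: "integrable M (\<lambda>f. indicator {f. \<exists>j<n. f (j, i)} f :: real)" for i
    by (rule measure_pmf.integrable_const_bound[where B=1]) auto
  have "measure_pmf.prob M {f. nonempty_count n m f \<ge> n} = measure M {f\<in>space M. X f \<ge> real n}"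
    using cnt by (metis (no_types, lifting) of_nat_le_iff space_measure_pmf UNIV_I)
  also have "\<dots> \<le> (\<integral>f. X f \<partial>M) / real n"
    by (rule integral_Markov_inequality_measure[where A=UNIV])
       (use False int in \<open>auto simp: X_def sum_nonneg\<close>)
  also have "(\<integral>f. X f \<partial>M) = (\<Sum>i<m. measure_pmf.prob M {f. \<exists>j<n. f (j, i)})"
    unfolding X_def using int by (simp add: Bochner_Integration.integral_sum)
  also have "\<dots> \<le> (\<Sum>i<m. min 1 (real n * \<rho> i))"
    unfolding M_def by (intro sum_mono prob_nonempty assms) auto
  finally show ?thesis unfolding M_def using False by (simp add: divide_right_mono field_simps)
qed

theorem lemma4p2:
  fixes \<rho> :: "nat \<Rightarrow> real" and \<sigma> :: real and m :: "nat \<Rightarrow> nat"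
  assumes rho_range: "\<And>i. 0 \<le> \<rho> i \<and> \<rho> i \<le> 1"
    and rho_little_o: "\<rho> \<in> o(\<lambda>i. 1 / real i)"
    and sigma_pos: "\<sigma> > 0"
    and success: "\<And>n. measure_pmf.prob (coding_pmf \<rho> n (m n))
                        {f. nonempty_count n (m n) f \<ge> n} \<ge> \<sigma>"
  shows "\<forall>\<eta>>0. \<exists>n0. \<forall>n>n0. real (m n) > \<eta> * real n"
proof (intro allI impI)
  fix \<eta> :: real assume eta: "\<eta> > 0"
  define \<delta> where "\<delta> = \<sigma> / 4"
  define \<epsilon> where "\<epsilon> = \<sigma> * \<delta> / (4 * \<eta>)"
  have dpos: "\<delta> > 0" and epos: "\<epsilon> > 0" using sigma_pos eta by (auto simp: \<delta>_def \<epsilon>_def)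
  have "eventually (\<lambda>i. norm (\<rho> i) \<le> \<epsilon> * norm (1 / real i)) at_top"
    using landau_o.smallD[OF rho_little_o epos] by simp
  then obtain I where I: "\<And>i. i \<ge> I \<Longrightarrow> \<bar>\<rho> i\<bar> \<le> \<epsilon> * \<bar>1 / real i\<bar>"
    by (auto simp: eventually_at_top_linorder)
  define n0 where "n0 = nat \<lceil>2 * (real I + 1) / \<sigma>\<rceil>"
  show "\<exists>n0. \<forall>n>n0. real (m n) > \<eta> * real n"
  proof (intro exI allI impI)
    fix n assume n: "n > n0"
    show "real (m n) > \<eta> * real n"
    proof (rule ccontr)
      assume "\<not> real (m n) > \<eta> * real n"
      hence mle: "real (m n) \<le> \<eta> * real n" by simp
      have npos: "n > 0" using n by simp
      have nbig: "real I + 1 < \<sigma> * real n / 2"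
      proof -
        have "2 * (real I + 1) / \<sigma> < real n" using n unfolding n0_def by linarith
        then show ?thesis using sigma_pos by (simp add: field_simps)
      qed
      define K where "K = I + nat \<lceil>\<delta> * real n\<rceil>"
      define g where "g = (\<lambda>i::nat. (if i < K then 1 else 0) + \<epsilon> / \<delta> :: real)"
      have gi: "min 1 (real n * \<rho> i) \<le> g i" for i
      proof (cases "i < K")
        case True
        have "\<epsilon> / \<delta> > 0" using epos dpos by simp
        then show ?thesis using True by (simp add: g_def min_le_iff_disj)
      next
        case False
        hence iI: "i \<ge> I" and id: "real i \<ge> \<delta> * real n" unfolding K_def by linarith+
        have ipos: "real i > 0" using id dpos npos
          by (metis less_le_trans mult_pos_pos of_nat_0_less_iff)
        have "\<rho> i \<le> \<epsilon> / real i" using I[OF iI] rho_range[of i] ipos by simp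
        hence "real n * \<rho> i \<le> real n * (\<epsilon> / real i)" by (intro mult_left_mono) auto
        also have "\<dots> \<le> \<epsilon> / \<delta>"
          using id ipos dpos epos by (simp add: field_simps mult_left_mono)
        finally show ?thesis unfolding g_def using False by simp
      qed
      have sum1: "(\<Sum>i<m n. (if i < K then 1 else 0 :: real)) \<le> real K"
      proof -
        have "(\<Sum>i<m n. (if i < K then 1 else 0 :: real)) = real (card ({..<m n} \<inter> {..<K}))"
          by (simp add: sum.If_cases lessThan_def)
        also have "\<dots> \<le> real K" using card_mono[of "{..<K}" "{..<m n} \<inter> {..<K}"] by simp
        finally show ?thesis .
      qed
      have "\<sigma> * real n \<le> measure_pmf.prob (coding_pmf \<rho> n (m n))
                        {f. nonempty_count n (m n) f \<ge> n} * real n"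
        using success[of n] by (simp add: mult_right_mono)
      also have "\<dots> \<le> (\<Sum>i<m n. min 1 (real n * \<rho> i))"
        by (rule markov_part[OF rho_range])
      also have "\<dots> \<le> (\<Sum>i<m n. g i)" by (intro sum_mono gi)
      also have "\<dots> = (\<Sum>i<m n. (if i < K then 1 else 0 :: real)) + real (m n) * (\<epsilon> / \<delta>)"
        by (simp add: g_def sum.distrib)
      also have "\<dots> \<le> real K + \<eta> * real n * (\<epsilon> / \<delta>)"
        using sum1 mle epos dpos by (intro add_mono mult_right_mono) auto
      also have "real K \<le> real I + \<delta> * real n + 1"
        unfolding K_def using dpos by (simp add: of_nat_nat)
      also have "\<eta> * real n * (\<epsilon> / \<delta>) = \<sigma> * real n / 4"
        using eta dpos by (simp add: \<epsilon>_def field_simps)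
      finally have "\<sigma> * real n \<le> real I + 1 + \<sigma> * real n / 2"
        by (simp add: \<delta>_def)
      then show False using nbig by linarith
    qed
  qed
qed

end
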